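(* Let $\mathcal{C}\le \mathbb{F}_q^n$ be a linear code with one-variable weight enumerator $W_\mathcal{C}(x)$ and homogeneous weight enumerator $W_\mathcal{C}(x,y)$. Then the stabilizer $\mathrm{Stab}_{\mathrm{GL}_2(\mathbb{C})}(W_\mathcal{C}(x,y))$ is finite if and only if $W_\mathcal{C}(x)$ has at least $3$ distinct roots in $\overline{\mathbb{Z}}$ (the algebraic integers; equivalently, at least $3$ distinct complex roots, since $W_\mathcal{C}(x)$ is a monic integer polynomial).
   Context: A linear code is a subspace $\mathcal{C}\le\mathbb{F}_q^n$; the weight $\mathrm{wt}(c)$ of $c\in\mathcal{C}$ is the number of nonzero coordinates. The one-variable weight enumerator is $W_\mathcal{C}(x)=\sum_{c\in\mathcal{C}}x^{n-\mathrm{wt}(c)}$ and the homogeneous weight enumerator is $W_\mathcal{C}(x,y)=\sum_{c\in\mathcal{C}}x^{n-\mathrm{wt}(c)}y^{\mathrm{wt}(c)}$. The group $\mathrm{GL}_2(\mathbb{C})$ acts on $\mathbb{C}[x,y]$ by $A\cdot p(x,y)=p(ax+by,cx+dy)$ for $A=\begin{pmatrix}a&b\\c&d\end{pmatrix}$, and $\mathrm{Stab}_{\mathrm{GL}_2(\mathbb{C})}(p)=\{A: A\cdot p=p\}$. *)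

theory Defs
  imports "HOL-Analysis.Analysis" "HOL-Computational_Algebra.Polynomial"
begin

text \<open>Words of length n over a field are modelled as functions nat => 'a vanishing
  outside {..<n}. A linear code is a subspace of this space F^n.\<close>

definition is_linear_code :: "nat \<Rightarrow> (nat \<Rightarrow> 'a::field) set \<Rightarrow> bool" where
  "is_linear_code n C \<longleftrightarrow>
     C \<subseteq> {v. \<forall>i\<ge>n. v i = 0} \<and> (\<lambda>_. 0) \<in> C \<and>
     (\<forall>u\<in>C. \<forall>v\<in>C. (\<lambda>i. u i + v i) \<in> C) \<and>
     (\<forall>a. \<forall>v\<in>C. (\<lambda>i. a * v i) \<in> C)"

definition wt :: "nat \<Rightarrow> (nat \<Rightarrow> 'a::zero) \<Rightarrow> nat" where
  "wt n v = card {i\<in>{..<n}. v i \<noteq> 0}"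

definition wenum1 :: "nat \<Rightarrow> (nat \<Rightarrow> 'a::zero) set \<Rightarrow> int poly" where
  "wenum1 n C = (\<Sum>c\<in>C. monom 1 (n - wt n c))"

text \<open>Homogeneous weight enumerator W_C(x,y), as a polynomial function on C^2 (v$1 = x, v$2 = y).\<close>
definition wenum2 :: "nat \<Rightarrow> (nat \<Rightarrow> 'a::zero) set \<Rightarrow> complex^2 \<Rightarrow> complex" where
  "wenum2 n C v = (\<Sum>c\<in>C. (v$1) ^ (n - wt n c) * (v$2) ^ (wt n c))"

text \<open>Stabilizer in GL_2(C) of a function p on C^2 under (A . p)(x,y) = p(ax+by, cx+dy),
  i.e. (A . p)(v) = p(A *v v).  Equality of polynomials over C equals equality of functions.\<close>
definition stab_GL2 :: "(complex^2 \<Rightarrow> complex) \<Rightarrow> (complex^2^2) set" where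
  "stab_GL2 p = {A. invertible A \<and> (\<lambda>v. p (A *v v)) = p}"

end

theory Submission
  imports Defs "HOL-Computational_Algebra.Fundamental_Theorem_Algebra"
begin


lemma code_finite:
  fixes C :: "(nat \<Rightarrow> 'a::{field,finite}) set"
  assumes "is_linear_code n C" shows "finite C"
proof -
  have sub: "C \<subseteq> {v. \<forall>i\<ge>n. v i = 0}" using assms unfolding is_linear_code_def by blast
  have inj: "inj_on (\<lambda>v. restrict v {..<n}) {v::nat\<Rightarrow>'a. \<forall>i\<ge>n. v i = 0}"
  proof (rule inj_onI)
    fix u v :: "nat \<Rightarrow> 'a" assume u: "u \<in> {v. \<forall>i\<ge>n. v i = 0}" and v: "v \<in> {v. \<forall>i\<ge>n. v i = 0}"
      and eq: "restrict u {..<n} = restrict v {..<n}"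
    show "u = v"
    proof
      fix i show "u i = v i"
      proof (cases "i < n")
        case True then show ?thesis using fun_cong[OF eq, of i] by simp
      next
        case False then show ?thesis using u v by auto
      qed
    qed
  qed
  have "(\<lambda>v. restrict v {..<n}) ` {v::nat\<Rightarrow>'a. \<forall>i\<ge>n. v i = 0} \<subseteq> PiE {..<n} (\<lambda>_. UNIV)"
    by (intro image_subsetI) (simp add: PiE_iff)
  moreover have "finite (PiE {..<n} (\<lambda>_. (UNIV::'a set)))" by (intro finite_PiE) auto
  ultimately have "finite {v::nat\<Rightarrow>'a. \<forall>i\<ge>n. v i = 0}"
    using finite_imageD[OF _ inj] finite_subset by blast
  then show ?thesis using sub finite_subset by blast
qed

lemma wt_le: "wt n c \<le> n"
  unfolding wt_def using card_mono[of "{..<n}" "{i\<in>{..<n}. c i \<noteq> 0}"] by auto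

lemma wt_zero_iff:
  fixes C :: "(nat \<Rightarrow> 'a::{field,finite}) set"
  assumes "is_linear_code n C" "c \<in> C" shows "wt n c = 0 \<longleftrightarrow> c = (\<lambda>_. 0)"
proof -
  have out: "\<forall>i\<ge>n. c i = 0" using assms unfolding is_linear_code_def by blast
  have "wt n c = 0 \<longleftrightarrow> (\<forall>i<n. c i = 0)" unfolding wt_def by auto
  also have "\<dots> \<longleftrightarrow> c = (\<lambda>_. 0)" using out by (auto simp: fun_eq_iff) (metis not_less)
  finally show ?thesis .
qed

definition Pw :: "nat \<Rightarrow> (nat \<Rightarrow> 'a::zero) set \<Rightarrow> complex \<Rightarrow> complex \<Rightarrow> complex" where
  "Pw n C x y = (\<Sum>c\<in>C. x ^ (n - wt n c) * y ^ (wt n c))"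

lemma wenum2_Pw: "wenum2 n C v = Pw n C (v$1) (v$2)"
  unfolding wenum2_def Pw_def by simp

lemma Pw_hom: "Pw n C (m * x) (m * y) = m ^ n * Pw n C x y"
proof -
  have "\<And>c. (m*x) ^ (n - wt n c) * (m*y) ^ (wt n c) = m^n * (x ^ (n - wt n c) * y ^ (wt n c))"
  proof -
    fix c
    have "m ^ (n - wt n c) * m ^ wt n c = m ^ n" using wt_le[of n c]
      by (simp flip: power_add)
    then show "(m*x) ^ (n - wt n c) * (m*y) ^ (wt n c) = m^n * (x ^ (n - wt n c) * y ^ (wt n c))"
      by (simp add: power_mult_distrib algebra_simps)
  qed
  then show ?thesis unfolding Pw_def sum_distrib_left by (intro sum.cong) auto
qed

lemma Pw_10:
  fixes C :: "(nat \<Rightarrow> 'a::{field,finite}) set"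
  assumes "is_linear_code n C" shows "Pw n C 1 0 = 1"
proof -
  have fin: "finite C" using code_finite[OF assms] .
  have z: "(\<lambda>_. 0) \<in> C" using assms unfolding is_linear_code_def by blast
  have "Pw n C 1 0 = (\<Sum>c\<in>C. if c = (\<lambda>_. 0) then 1 else 0)"
    unfolding Pw_def
  proof (rule sum.cong)
    fix c assume c: "c \<in> C"
    show "1 ^ (n - wt n c) * 0 ^ wt n c = (if c = (\<lambda>_. 0) then 1 else (0::complex))"
      using wt_zero_iff[OF assms c] by (cases "c = (\<lambda>_. 0)") auto
  qed simp
  also have "\<dots> = 1" using fin z by (simp add: sum.delta)
  finally show ?thesis .
qed

definition Fp :: "nat \<Rightarrow> (nat \<Rightarrow> 'a::zero) set \<Rightarrow> complex poly" where
  "Fp n C = map_poly of_int (wenum1 n C)"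

lemma Fp_sum:
  fixes C :: "(nat \<Rightarrow> 'a::{field,finite}) set"
  assumes "is_linear_code n C" shows "Fp n C = (\<Sum>c\<in>C. monom 1 (n - wt n c))"
proof -
  have fin: "finite C" using code_finite[OF assms] .
  show ?thesis unfolding Fp_def wenum1_def
    by (rule poly_eqI) (simp add: coeff_map_poly coeff_sum of_int_sum coeff_monom, intro sum.cong, auto)
qed



lemma Fp_poly:
  fixes C :: "(nat \<Rightarrow> 'a::{field,finite}) set"
  assumes "is_linear_code n C" shows "poly (Fp n C) x = Pw n C x 1"
  unfolding Fp_sum[OF assms] Pw_def by (simp add: poly_sum poly_monom)

lemma Fp_coeff:
  fixes C :: "(nat \<Rightarrow> 'a::{field,finite}) set"
  assumes "is_linear_code n C" shows "coeff (Fp n C) k = (\<Sum>c\<in>C. if n - wt n c = k then 1 else 0)"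
  unfolding Fp_sum[OF assms] by (simp add: coeff_sum coeff_monom)

lemma Fp_coeff_n:
  fixes C :: "(nat \<Rightarrow> 'a::{field,finite}) set"
  assumes "is_linear_code n C" shows "coeff (Fp n C) n = 1"
proof -
  have "coeff (Fp n C) n = Pw n C 1 0"
    unfolding Fp_coeff[OF assms] Pw_def
  proof (rule sum.cong)
    fix c assume c: "c \<in> C"
    have "n - wt n c = n \<longleftrightarrow> wt n c = 0" using wt_le[of n c] by auto
    then show "(if n - wt n c = n then 1 else 0) = 1 ^ (n - wt n c) * (0::complex) ^ wt n c"
      by auto
  qed simp
  then show ?thesis using Pw_10[OF assms] by simp
qed

lemma Fp_coeff_gt:
  fixes C :: "(nat \<Rightarrow> 'a::{field,finite}) set"
  assumes "is_linear_code n C" "k > n" shows "coeff (Fp n C) k = 0"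
  unfolding Fp_coeff[OF assms(1)] using assms(2) by (intro sum.neutral) auto

lemma Fp_degree:
  fixes C :: "(nat \<Rightarrow> 'a::{field,finite}) set"
  assumes "is_linear_code n C" shows "degree (Fp n C) = n" "lead_coeff (Fp n C) = 1" "Fp n C \<noteq> 0"
proof -
  have "degree (Fp n C) \<le> n" using Fp_coeff_gt[OF assms] by (intro degree_le) auto
  moreover have "n \<le> degree (Fp n C)" using Fp_coeff_n[OF assms] by (intro le_degree) auto
  ultimately show d: "degree (Fp n C) = n" by simp
  then show "lead_coeff (Fp n C) = 1" using Fp_coeff_n[OF assms] by simp
  then show "Fp n C \<noteq> 0" by auto
qed

lemma Pw_y:
  fixes C :: "(nat \<Rightarrow> 'a::{field,finite}) set"
  assumes "is_linear_code n C" "y \<noteq> 0" shows "Pw n C x y = y ^ n * poly (Fp n C) (x / y)"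
  using Pw_hom[of n C y "x/y" 1] assms by (simp add: Fp_poly[OF assms(1)])

lemma Pw_x0:
  fixes C :: "(nat \<Rightarrow> 'a::{field,finite}) set"
  assumes "is_linear_code n C" shows "Pw n C x 0 = x ^ n"
  using Pw_hom[of n C x 1 0] Pw_10[OF assms] by simp

definition mk2 :: "complex \<Rightarrow> complex \<Rightarrow> complex \<Rightarrow> complex \<Rightarrow> complex^2^2" where
  "mk2 a b c d = vector [vector [a,b], vector [c,d]]"

lemma mk2_nth[simp]: "mk2 a b c d $ 1 $ 1 = a" "mk2 a b c d $ 1 $ 2 = b"
   "mk2 a b c d $ 2 $ 1 = c" "mk2 a b c d $ 2 $ 2 = d"
  unfolding mk2_def by simp_all

lemma mat_eq2: "(A::'b^2^2) = B \<longleftrightarrow> A$1$1 = B$1$1 \<and> A$1$2 = B$1$2 \<and> A$2$1 = B$2$1 \<and> A$2$2 = B$2$2"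
  by (auto simp: vec_eq_iff forall_2)

lemma mk2_eta: "A = mk2 (A$1$1) (A$1$2) (A$2$1) (A$2$2)"
  by (simp add: mat_eq2)

lemma mv2: "((A::complex^2^2) *v v)$1 = A$1$1 * v$1 + A$1$2 * v$2" "(A *v v)$2 = A$2$1 * v$1 + A$2$2 * v$2"
  by (simp_all add: matrix_vector_mult_def sum_2)

lemma stab_iff:
  "A \<in> stab_GL2 (wenum2 n C) \<longleftrightarrow> A$1$1 * A$2$2 - A$1$2 * A$2$1 \<noteq> 0 \<and>
     (\<forall>x y. Pw n C (A$1$1 * x + A$1$2 * y) (A$2$1 * x + A$2$2 * y) = Pw n C x y)"
proof -
  have "(\<lambda>v. wenum2 n C (A *v v)) = wenum2 n C \<longleftrightarrow>
     (\<forall>x y. Pw n C (A$1$1 * x + A$1$2 * y) (A$2$1 * x + A$2$2 * y) = Pw n C x y)"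
  proof
    assume h: "(\<lambda>v. wenum2 n C (A *v v)) = wenum2 n C"
    show "\<forall>x y. Pw n C (A$1$1 * x + A$1$2 * y) (A$2$1 * x + A$2$2 * y) = Pw n C x y"
    proof (intro allI)
      fix x y
      show "Pw n C (A$1$1 * x + A$1$2 * y) (A$2$1 * x + A$2$2 * y) = Pw n C x y"
        using fun_cong[OF h, of "vector [x,y]"] by (simp add: wenum2_Pw mv2)
    qed
  next
    assume h: "\<forall>x y. Pw n C (A$1$1 * x + A$1$2 * y) (A$2$1 * x + A$2$2 * y) = Pw n C x y"
    show "(\<lambda>v. wenum2 n C (A *v v)) = wenum2 n C"
      by (rule ext) (simp add: wenum2_Pw mv2 h)
  qed
  then show ?thesis unfolding stab_GL2_def by (simp add: invertible_det_nz det_2)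
qed

lemma quad_zero:
  fixes a b c :: complex
  assumes "z1 \<noteq> z2" "z1 \<noteq> z3" "z2 \<noteq> z3"
    and "a * z1^2 + b * z1 + c = 0" "a * z2^2 + b * z2 + c = 0" "a * z3^2 + b * z3 + c = 0"
  shows "a = 0 \<and> b = 0 \<and> c = 0"
proof -
  have i1: "(z1 - z2) * (a * (z1 + z2) + b) = (a * z1^2 + b * z1 + c) - (a * z2^2 + b * z2 + c)"
    by (simp add: power2_eq_square algebra_simps)
  have i2: "(z1 - z3) * (a * (z1 + z3) + b) = (a * z1^2 + b * z1 + c) - (a * z3^2 + b * z3 + c)"
    by (simp add: power2_eq_square algebra_simps)
  have f1: "a * (z1 + z2) + b = 0" using i1 assms by simp
  have f2: "a * (z1 + z3) + b = 0" using i2 assms by simp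
  have "a * (z2 - z3) = (a * (z1 + z2) + b) - (a * (z1 + z3) + b)" by (simp add: algebra_simps)
  then have "a * (z2 - z3) = 0" using f1 f2 by simp
  then have a: "a = 0" using assms(3) by simp
  then have "b = 0" using f1 by simp
  then show ?thesis using a assms(4) by simp
qed



lemma key_quad:
  fixes a b c d e f g h z r :: complex
  assumes "a*z + b = r*(e*z+f)" "c*z+d = r*(g*z+h)"
  shows "(e*c - g*a)*z^2 + ((e*d - g*b) - (h*a - f*c))*z + (-(h*b - f*d)) = 0"
proof -
  have "(e*c - g*a)*z^2 + ((e*d - g*b) - (h*a - f*c))*z + (-(h*b - f*d))
        = z * (e*(c*z+d) - g*(a*z+b)) - (h*(a*z+b) - f*(c*z+d))"
    by (simp add: power2_eq_square algebra_simps)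
  also have "\<dots> = z * (e*(r*(g*z+h)) - g*(r*(e*z+f))) - (h*(r*(e*z+f)) - f*(r*(g*z+h)))"
    using assms by simp
  also have "\<dots> = 0" by (simp add: algebra_simps)
  finally show ?thesis .
qed

lemma key2x2:
  fixes a b c d e f g h z1 z2 z3 r1 r2 r3 :: complex
  assumes D: "e*h - f*g \<noteq> 0" and dist: "z1 \<noteq> z2" "z1 \<noteq> z3" "z2 \<noteq> z3"
    and "a*z1 + b = r1*(e*z1+f)" "c*z1+d = r1*(g*z1+h)"
    and "a*z2 + b = r2*(e*z2+f)" "c*z2+d = r2*(g*z2+h)"
    and "a*z3 + b = r3*(e*z3+f)" "c*z3+d = r3*(g*z3+h)"
  shows "\<exists>\<mu>. a = \<mu>*e \<and> b = \<mu>*f \<and> c = \<mu>*g \<and> d = \<mu>*h"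
proof -
  define m11 where "m11 = h*a - f*c"
  define m12 where "m12 = h*b - f*d"
  define m21 where "m21 = e*c - g*a"
  define m22 where "m22 = e*d - g*b"
  have q: "m21 = 0 \<and> m22 - m11 = 0 \<and> -m12 = 0"
    unfolding m11_def m12_def m21_def m22_def
    by (rule quad_zero[OF dist key_quad key_quad key_quad]) (use assms in auto)
  define \<mu> where "\<mu> = m11 / (e*h - f*g)"
  have 1: "(e*h - f*g) * a = e*m11 + f*m21" unfolding m11_def m21_def by (simp add: algebra_simps)
  have 2: "(e*h - f*g) * b = e*m12 + f*m22" unfolding m12_def m22_def by (simp add: algebra_simps)
  have 3: "(e*h - f*g) * c = g*m11 + h*m21" unfolding m11_def m21_def by (simp add: algebra_simps)
  have 4: "(e*h - f*g) * d = g*m12 + h*m22" unfolding m12_def m22_def by (simp add: algebra_simps)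
  have "a = \<mu>*e \<and> b = \<mu>*f \<and> c = \<mu>*g \<and> d = \<mu>*h"
    using 1 2 3 4 q D unfolding \<mu>_def by (auto simp: field_simps)
  then show ?thesis by blast
qed



definition phi :: "complex^2^2 \<Rightarrow> complex \<Rightarrow> complex" where
  "phi A z = (A$1$1 * z + A$1$2) / (A$2$1 * z + A$2$2)"

lemma stab_root:
  fixes C :: "(nat \<Rightarrow> 'a::{field,finite}) set"
  assumes lc: "is_linear_code n C" and A: "A \<in> stab_GL2 (wenum2 n C)"
    and z: "poly (Fp n C) z = 0"
  shows "A$2$1 * z + A$2$2 \<noteq> 0" "poly (Fp n C) (phi A z) = 0"
proof -
  have det: "A$1$1 * A$2$2 - A$1$2 * A$2$1 \<noteq> 0"
   and inv: "\<And>x y. Pw n C (A$1$1 * x + A$1$2 * y) (A$2$1 * x + A$2$2 * y) = Pw n C x y"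
    using A unfolding stab_iff by auto
  have P0: "Pw n C (A$1$1 * z + A$1$2) (A$2$1 * z + A$2$2) = 0"
    using inv[of z 1] z Fp_poly[OF lc, of z] by simp
  show w2: "A$2$1 * z + A$2$2 \<noteq> 0"
  proof
    assume h: "A$2$1 * z + A$2$2 = 0"
    then have "(A$1$1 * z + A$1$2) ^ n = 0" using P0 Pw_x0[OF lc] by simp
    then have h1: "A$1$1 * z + A$1$2 = 0" by simp
    have "A$1$1 * A$2$2 - A$1$2 * A$2$1 = A$1$1 * (A$2$1 * z + A$2$2) - A$2$1 * (A$1$1 * z + A$1$2)"
      by (simp add: algebra_simps)
    then show False using h h1 det by simp
  qed
  show "poly (Fp n C) (phi A z) = 0"
    using P0 Pw_y[OF lc w2] w2 unfolding phi_def by simp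
qed

lemma finite_dir:
  fixes C :: "(nat \<Rightarrow> 'a::{field,finite}) set"
  assumes lc: "is_linear_code n C" and c3: "card {z. poly (Fp n C) z = 0} \<ge> 3"
  shows "finite (stab_GL2 (wenum2 n C))"
proof -
  define Z where "Z = {z. poly (Fp n C) z = 0}"
  define S where "S = stab_GL2 (wenum2 n C)"
  have finZ: "finite Z" using c3 unfolding Z_def by (intro card_ge_0_finite) linarith
  obtain T where T: "T \<subseteq> Z" "card T = 3" using c3 obtain_subset_with_card_n unfolding Z_def by metis
  then obtain z1 z2 z3 where zs: "z1 \<in> Z" "z2 \<in> Z" "z3 \<in> Z" "z1 \<noteq> z2" "z2 \<noteq> z3" "z1 \<noteq> z3"
    unfolding card_3_iff by auto
  have n0: "n \<noteq> 0"
  proof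
    assume "n = 0"
    then have "Pw n C z1 1 = Pw n C 1 0" using Pw_hom[of n C 0 z1 1] Pw_hom[of n C 0 1 0] by simp
    then show False using Pw_10[OF lc] zs(1) Fp_poly[OF lc, of z1] unfolding Z_def by simp
  qed
  define T where "T = (\<lambda>\<psi>. {A\<in>S. restrict (phi A) Z = \<psi>})"
  have cover: "S \<subseteq> (\<Union>\<psi>\<in>Z \<rightarrow>\<^sub>E Z. T \<psi>)"
  proof
    fix A assume A: "A \<in> S"
    have "restrict (phi A) Z \<in> Z \<rightarrow>\<^sub>E Z"
      using stab_root(2)[OF lc A[unfolded S_def]] unfolding Z_def by auto
    then show "A \<in> (\<Union>\<psi>\<in>Z \<rightarrow>\<^sub>E Z. T \<psi>)" using A unfolding T_def by blast
  qed
  have fibre: "finite (T \<psi>)" for \<psi>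
  proof (cases "T \<psi> = {}")
    case True then show ?thesis by simp
  next
    case False
    then obtain B where B: "B \<in> S" "restrict (phi B) Z = \<psi>" unfolding T_def by auto
    have Bdet: "B$1$1 * B$2$2 - B$1$2 * B$2$1 \<noteq> 0"
     and Binv: "\<And>x y. Pw n C (B$1$1 * x + B$1$2 * y) (B$2$1 * x + B$2$2 * y) = Pw n C x y"
      using B(1) unfolding S_def stab_iff by auto
    have "T \<psi> \<subseteq> (\<lambda>\<mu>. mk2 (\<mu>*B$1$1) (\<mu>*B$1$2) (\<mu>*B$2$1) (\<mu>*B$2$2)) ` {\<mu>. \<mu>^n = 1}"
    proof
      fix A assume "A \<in> T \<psi>"
      then have A: "A \<in> S" "restrict (phi A) Z = restrict (phi B) Z" using B unfolding T_def by auto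
      have Ainv: "\<And>x y. Pw n C (A$1$1 * x + A$1$2 * y) (A$2$1 * x + A$2$2 * y) = Pw n C x y"
        using A(1) unfolding S_def stab_iff by auto
      have rel: "\<exists>r. A$1$1 * z + A$1$2 = r * (B$1$1 * z + B$1$2) \<and> A$2$1 * z + A$2$2 = r * (B$2$1 * z + B$2$2)"
        if z: "z \<in> Z" for z
      proof -
        have wa: "A$2$1 * z + A$2$2 \<noteq> 0" using stab_root(1)[OF lc A(1)[unfolded S_def]] z unfolding Z_def by auto
        have wb: "B$2$1 * z + B$2$2 \<noteq> 0" using stab_root(1)[OF lc B(1)[unfolded S_def]] z unfolding Z_def by auto
        have "phi A z = phi B z" using fun_cong[OF A(2), of z] z by simp
        then have e: "(A$1$1 * z + A$1$2) / (A$2$1 * z + A$2$2) = (B$1$1 * z + B$1$2) / (B$2$1 * z + B$2$2)"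
          unfolding phi_def .
        define r where "r = (A$2$1 * z + A$2$2) / (B$2$1 * z + B$2$2)"
        have "A$1$1 * z + A$1$2 = r * (B$1$1 * z + B$1$2)"
          using e wa wb unfolding r_def by (simp add: field_simps)
        moreover have "A$2$1 * z + A$2$2 = r * (B$2$1 * z + B$2$2)" using wb unfolding r_def by simp
        ultimately show ?thesis by blast
      qed
      obtain r1 where r1: "A$1$1 * z1 + A$1$2 = r1 * (B$1$1 * z1 + B$1$2)" "A$2$1 * z1 + A$2$2 = r1 * (B$2$1 * z1 + B$2$2)"
        using rel[OF zs(1)] by blast
      obtain r2 where r2: "A$1$1 * z2 + A$1$2 = r2 * (B$1$1 * z2 + B$1$2)" "A$2$1 * z2 + A$2$2 = r2 * (B$2$1 * z2 + B$2$2)"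
        using rel[OF zs(2)] by blast
      obtain r3 where r3: "A$1$1 * z3 + A$1$2 = r3 * (B$1$1 * z3 + B$1$2)" "A$2$1 * z3 + A$2$2 = r3 * (B$2$1 * z3 + B$2$2)"
        using rel[OF zs(3)] by blast
      obtain \<mu> where mu: "A$1$1 = \<mu>*B$1$1" "A$1$2 = \<mu>*B$1$2" "A$2$1 = \<mu>*B$2$1" "A$2$2 = \<mu>*B$2$2"
        using key2x2[OF Bdet zs(4) zs(6) zs(5) r1 r2 r3] by blast
      have "\<mu>^n = 1"
      proof -
        have "1 = Pw n C (A$1$1) (A$2$1)" using Ainv[of 1 0] Pw_10[OF lc] by simp
        also have "\<dots> = \<mu>^n * Pw n C (B$1$1) (B$2$1)" using mu Pw_hom by simp
        also have "Pw n C (B$1$1) (B$2$1) = 1" using Binv[of 1 0] Pw_10[OF lc] by simp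
        finally show ?thesis by simp
      qed
      moreover have "A = mk2 (\<mu>*B$1$1) (\<mu>*B$1$2) (\<mu>*B$2$1) (\<mu>*B$2$2)"
        using mu by (simp add: mat_eq2)
      ultimately show "A \<in> (\<lambda>\<mu>. mk2 (\<mu>*B$1$1) (\<mu>*B$1$2) (\<mu>*B$2$1) (\<mu>*B$2$2)) ` {\<mu>. \<mu>^n = 1}"
        by blast
    qed
    moreover have "finite {\<mu>::complex. \<mu>^n = 1}" using n0 by (intro finite_roots_unity) auto
    ultimately show ?thesis using finite_subset by blast
  qed
  have "finite (\<Union>\<psi>\<in>Z \<rightarrow>\<^sub>E Z. T \<psi>)"
    using finZ fibre by (intro finite_UN_I finite_PiE) auto
  then show ?thesis using cover finite_subset unfolding S_def by blast
qed



lemma infinite_from_nat: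
  fixes M :: "nat \<Rightarrow> 'b"
  assumes "\<And>k. M k \<in> S" "inj M" shows "infinite S"
proof
  assume fS: "finite S"
  have "range M \<subseteq> S" using assms(1) by auto
  then have "finite (range M)" using fS by (rule finite_subset)
  then have "finite (UNIV::nat set)" using assms(2) by (rule finite_imageD)
  then show False by simp
qed

lemma case0:
  fixes C :: "(nat \<Rightarrow> 'a::{field,finite}) set"
  assumes lc: "is_linear_code n C" and Z: "{z. poly (Fp n C) z = 0} = {}"
  shows "infinite (stab_GL2 (wenum2 n C))"
proof -
  have dec: "smult (lead_coeff (Fp n C)) (\<Prod>z\<in>{z. poly (Fp n C) z = 0}. [:-z, 1:] ^ order z (Fp n C)) = Fp n C"
    by (rule complex_poly_decompose)
  have "smult 1 1 = Fp n C" using dec[unfolded Z Fp_degree(2)[OF lc] prod.empty] .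
  then have "Fp n C = 1" by (metis smult_1_left)
  then have n0: "n = 0" using Fp_degree(1)[OF lc] by simp
  have const: "Pw n C x y = 1" for x y
    using Pw_hom[of n C 0 x y] Pw_hom[of n C 0 1 0] Pw_10[OF lc] n0 by simp
  let ?M = "\<lambda>k::nat. mk2 (of_nat (Suc k)) 0 0 1"
  show ?thesis
  proof (rule infinite_from_nat)
    fix k show "?M k \<in> stab_GL2 (wenum2 n C)"
      unfolding stab_iff using of_nat_neq_0[of k, where 'a=complex] by (simp only: const mk2_nth) simp
  next
    show "inj ?M" by (rule injI) (simp add: mat_eq2)
  qed
qed

lemma case1:
  fixes C :: "(nat \<Rightarrow> 'a::{field,finite}) set"
  assumes lc: "is_linear_code n C" and Z: "{z. poly (Fp n C) z = 0} = {z}"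
  shows "infinite (stab_GL2 (wenum2 n C))"
proof -
  have dec: "smult (lead_coeff (Fp n C)) (\<Prod>z\<in>{z. poly (Fp n C) z = 0}. [:-z, 1:] ^ order z (Fp n C)) = Fp n C"
    by (rule complex_poly_decompose)
  have h: "[:-z, 1:] ^ order z (Fp n C) = Fp n C" using dec[unfolded Z] by (simp add: Fp_degree(2)[OF lc])
  have m: "order z (Fp n C) = n" using arg_cong[OF h, of degree] Fp_degree(1)[OF lc] degree_linear_power[of "-z"] by simp
  have F': "Fp n C = [:-z, 1:] ^ n" using h[unfolded m, symmetric] .
  have form: "Pw n C x y = (x - z*y)^n" for x y
  proof (cases "y = 0")
    case True then show ?thesis using Pw_x0[OF lc] by simp
  next
    case False
    have "Pw n C x y = y^n * (x/y - z)^n" using Pw_y[OF lc False] unfolding F' by (simp add: poly_power)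
    also have "\<dots> = (y * (x/y - z))^n" by (simp add: power_mult_distrib)
    also have "y * (x/y - z) = x - z*y" using False by (simp add: field_simps)
    finally show ?thesis .
  qed
  let ?M = "\<lambda>k::nat. mk2 (1 + of_nat k * z) (- of_nat k * z^2) (of_nat k) (1 - of_nat k * z)"
  show ?thesis
  proof (rule infinite_from_nat)
    fix k
    define t :: complex where "t = of_nat k"
    have l: "(1 + t * z) * x + (- t * z^2) * y - z * (t * x + (1 - t*z) * y) = x - z*y" for x y
      by (simp add: power2_eq_square algebra_simps)
    have d: "(1 + t * z) * (1 - t*z) - (- t * z^2) * t = 1"
      by (simp add: power2_eq_square algebra_simps)
    show "?M k \<in> stab_GL2 (wenum2 n C)"
      unfolding stab_iff using l d unfolding t_def by (simp add: form)
  next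
    show "inj ?M" by (rule injI) (simp add: mat_eq2)
  qed
qed

lemma two_lin:
  fixes z1 z2 t s x y :: complex
  assumes "z1 \<noteq> z2"
  defines "D \<equiv> z2 - z1"
  shows "((t*z2 - s*z1)/D) * x + ((s - t)*z1*z2/D) * y - z1 * (((t - s)/D) * x + ((s*z2 - t*z1)/D) * y) = t * (x - z1*y)"
    "((t*z2 - s*z1)/D) * x + ((s - t)*z1*z2/D) * y - z2 * (((t - s)/D) * x + ((s*z2 - t*z1)/D) * y) = s * (x - z2*y)"
    "((t*z2 - s*z1)/D) * ((s*z2 - t*z1)/D) - ((s - t)*z1*z2/D) * ((t - s)/D) = t * s"
    "((t - s)/D) * z2 + ((s*z2 - t*z1)/D) = t"
proof -
  have D: "D \<noteq> 0" using assms unfolding D_def by simp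
  have "((t*z2 - s*z1)/D) * x + ((s - t)*z1*z2/D) * y - z1 * (((t - s)/D) * x + ((s*z2 - t*z1)/D) * y)
     = (1/D) * (((t*z2 - s*z1)) * x + ((s - t)*z1*z2) * y - z1 * (((t - s)) * x + ((s*z2 - t*z1)) * y))"
    by (simp add: divide_inverse algebra_simps)
  also have "((t*z2 - s*z1)) * x + ((s - t)*z1*z2) * y - z1 * (((t - s)) * x + ((s*z2 - t*z1)) * y) = D * (t * (x - z1*y))"
    unfolding D_def by (simp add: algebra_simps)
  finally show "((t*z2 - s*z1)/D) * x + ((s - t)*z1*z2/D) * y - z1 * (((t - s)/D) * x + ((s*z2 - t*z1)/D) * y) = t * (x - z1*y)"
    using D by simp
  have "((t*z2 - s*z1)/D) * x + ((s - t)*z1*z2/D) * y - z2 * (((t - s)/D) * x + ((s*z2 - t*z1)/D) * y)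
     = (1/D) * (((t*z2 - s*z1)) * x + ((s - t)*z1*z2) * y - z2 * (((t - s)) * x + ((s*z2 - t*z1)) * y))"
    by (simp add: divide_inverse algebra_simps)
  also have "((t*z2 - s*z1)) * x + ((s - t)*z1*z2) * y - z2 * (((t - s)) * x + ((s*z2 - t*z1)) * y) = D * (s * (x - z2*y))"
    unfolding D_def by (simp add: algebra_simps)
  finally show "((t*z2 - s*z1)/D) * x + ((s - t)*z1*z2/D) * y - z2 * (((t - s)/D) * x + ((s*z2 - t*z1)/D) * y) = s * (x - z2*y)"
    using D by simp
  show "((t*z2 - s*z1)/D) * ((s*z2 - t*z1)/D) - ((s - t)*z1*z2/D) * ((t - s)/D) = t * s"
  proof -
    have e: "(t*z2 - s*z1) * (s*z2 - t*z1) - ((s - t)*z1*z2) * (t - s) = t * s * D^2"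
      unfolding D_def by (simp add: algebra_simps power2_eq_square)
    have "((t*z2 - s*z1)/D) * ((s*z2 - t*z1)/D) - ((s - t)*z1*z2/D) * ((t - s)/D)
        = ((t*z2 - s*z1) * (s*z2 - t*z1) - ((s - t)*z1*z2) * (t - s)) / (D*D)"
      using D by (simp add: field_simps)
    also have "\<dots> = t * s" unfolding e using D by (simp add: power2_eq_square)
    finally show ?thesis .
  qed
  have "((t - s)/D) * z2 + ((s*z2 - t*z1)/D) = (1/D) * ((t - s) * z2 + (s*z2 - t*z1))"
    by (simp add: divide_inverse algebra_simps)
  also have "(t - s) * z2 + (s*z2 - t*z1) = D * t" unfolding D_def by (simp add: algebra_simps)
  finally show "((t - s)/D) * z2 + ((s*z2 - t*z1)/D) = t" using D by simp
qed

lemma case2: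
  fixes C :: "(nat \<Rightarrow> 'a::{field,finite}) set"
  assumes lc: "is_linear_code n C" and Z: "{z. poly (Fp n C) z = 0} = {z1, z2}" and ne: "z1 \<noteq> z2"
  shows "infinite (stab_GL2 (wenum2 n C))"
proof -
  define a where "a = order z1 (Fp n C)"
  define b where "b = order z2 (Fp n C)"
  have dec: "smult (lead_coeff (Fp n C)) (\<Prod>z\<in>{z. poly (Fp n C) z = 0}. [:-z, 1:] ^ order z (Fp n C)) = Fp n C"
    by (rule complex_poly_decompose)
  have h: "[:-z1, 1:] ^ a * [:-z2, 1:] ^ b = Fp n C"
    using dec[unfolded Z Fp_degree(2)[OF lc]] ne unfolding a_def b_def by simp
  have "degree ([:-z1, 1:] ^ a * [:-z2, 1:] ^ b) = a + b"
    by (subst degree_mult_eq) (simp_all add: degree_linear_power)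
  then have nab: "n = a + b" using h Fp_degree(1)[OF lc] by simp
  have "poly (Fp n C) z2 = 0" using Z by auto
  then have b1: "b \<noteq> 0" using order_root Fp_degree(3)[OF lc] unfolding b_def by blast
  have pF: "poly (Fp n C) w = (w - z1)^a * (w - z2)^b" for w
  proof -
    have "poly ([:-z1, 1:] ^ a * [:-z2, 1:] ^ b) w = (w - z1)^a * (w - z2)^b" by (simp add: poly_power)
    then show ?thesis unfolding h .
  qed
  have form: "Pw n C x y = (x - z1*y)^a * (x - z2*y)^b" for x y
  proof (cases "y = 0")
    case True then show ?thesis using Pw_x0[OF lc] nab by (simp add: power_add)
  next
    case False
    have "Pw n C x y = (y^a * (x/y - z1)^a) * (y^b * (x/y - z2)^b)" using Pw_y[OF lc False, unfolded pF]
      by (simp add: nab power_add algebra_simps)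
    also have "\<dots> = (y * (x/y - z1))^a * (y * (x/y - z2))^b" by (simp add: power_mult_distrib)
    also have "y * (x/y - z1) = x - z1*y" using False by (simp add: field_simps)
    also have "y * (x/y - z2) = x - z2*y" using False by (simp add: field_simps)
    finally show ?thesis .
  qed
  define tt :: "nat \<Rightarrow> complex" where "tt k = of_nat (Suc k ^ b)" for k
  define ss :: "nat \<Rightarrow> complex" where "ss k = 1 / of_nat (Suc k ^ a)" for k
  define D where "D = z2 - z1"
  let ?M = "\<lambda>k. mk2 ((tt k*z2 - ss k*z1)/D) ((ss k - tt k)*z1*z2/D) ((tt k - ss k)/D) ((ss k*z2 - tt k*z1)/D)"
  show ?thesis
  proof (rule infinite_from_nat)
    fix k
    have tn: "tt k \<noteq> 0" unfolding tt_def by (simp del: of_nat_power)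
    have sn: "ss k \<noteq> 0" unfolding ss_def by (simp del: of_nat_power)
    have ts: "tt k ^ a * ss k ^ b = 1"
      unfolding tt_def ss_def by (simp add: power_divide flip: power_mult of_nat_power) (simp add: mult.commute)
    note L = two_lin[OF ne, of "tt k" "ss k", folded D_def]
    show "?M k \<in> stab_GL2 (wenum2 n C)"
      unfolding stab_iff mk2_nth
    proof (intro conjI allI)
      show "(tt k*z2 - ss k*z1)/D * ((ss k*z2 - tt k*z1)/D) - (ss k - tt k)*z1*z2/D * ((tt k - ss k)/D) \<noteq> 0"
        using L(3) tn sn by simp
    next
      fix x y
      show "Pw n C ((tt k*z2 - ss k*z1)/D * x + (ss k - tt k)*z1*z2/D * y) ((tt k - ss k)/D * x + (ss k*z2 - tt k*z1)/D * y) = Pw n C x y"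
        unfolding form L(1,2)
        by (simp add: power_mult_distrib) (metis (no_types, lifting) ts mult.assoc mult.commute mult.left_commute mult_1)
    qed
  next
    show "inj ?M"
    proof (rule injI)
      fix k k' assume "?M k = ?M k'"
      then have "(\<lambda>A. A$2$1 * z2 + A$2$2) (?M k) = (\<lambda>A. A$2$1 * z2 + A$2$2) (?M k')" by (rule arg_cong)
      then have "(tt k - ss k)/D * z2 + (ss k*z2 - tt k*z1)/D = (tt k' - ss k')/D * z2 + (ss k'*z2 - tt k'*z1)/D"
        by (simp only: mk2_nth)
      then have "tt k = tt k'" using two_lin(4)[OF ne, folded D_def] by simp
      then have "Suc k ^ b = Suc k' ^ b" unfolding tt_def by (simp only: of_nat_eq_iff)
      then show "k = k'" using b1 by (simp add: power_eq_iff_eq_base)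
    qed
  qed
qed


theorem theorem4p2:
  fixes C :: "(nat \<Rightarrow> 'a::{field,finite}) set" and n :: nat
  assumes "is_linear_code n C"
  shows "finite (stab_GL2 (wenum2 n C)) \<longleftrightarrow>
         card {z::complex. poly (map_poly of_int (wenum1 n C)) z = 0} \<ge> 3"
proof
  assume fin: "finite (stab_GL2 (wenum2 n C))"
  show "card {z::complex. poly (map_poly of_int (wenum1 n C)) z = 0} \<ge> 3"
  proof (rule ccontr)
    assume "\<not> ?thesis"
    then have c: "card {z. poly (Fp n C) z = 0} < 3" unfolding Fp_def by (simp only: not_le)
    have fZ: "finite {z. poly (Fp n C) z = 0}" using Fp_degree(3)[OF assms] by (rule poly_roots_finite)
    consider "card {z. poly (Fp n C) z = 0} = 0" | "card {z. poly (Fp n C) z = 0} = 1"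
      | "card {z. poly (Fp n C) z = 0} = 2" using c by linarith
    then show False
    proof cases
      case 1
      then have "{z. poly (Fp n C) z = 0} = {}" using fZ by (simp only: card_0_eq)
      then have "infinite (stab_GL2 (wenum2 n C))" by (rule case0[OF assms])
      then show False using fin by (rule notE)
    next
      case 2
      then have "\<exists>z. {z. poly (Fp n C) z = 0} = {z}" using card_1_singleton_iff[THEN iffD1] by simp
      then obtain z where "{z. poly (Fp n C) z = 0} = {z}" by (elim exE)
      then have "infinite (stab_GL2 (wenum2 n C))" by (rule case1[OF assms])
      then show False using fin by (rule notE)
    next
      case 3
      then obtain z1 z2 where z12: "{z. poly (Fp n C) z = 0} = {z1, z2}" "z1 \<noteq> z2" by (auto simp only: card_2_iff)
      from case2[OF assms z12] show False using fin by (rule notE)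
    qed
  qed
next
  assume "card {z::complex. poly (map_poly of_int (wenum1 n C)) z = 0} \<ge> 3"
  then show "finite (stab_GL2 (wenum2 n C))" by (rule finite_dir[OF assms, unfolded Fp_def])
qed

end
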